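(* Let $\mathrm{cost}(n)=\ell(n)/\pi(n)$ for nodes $n$ (with value $+\infty$ when $\pi(n)=0$), and for a state $s$ let $\mathrm{cost}(s)=\min\{\mathrm{cost}(n): T(n)=s\}$. Then LevinTS run with policy $\pi$ expands states in best-first order and at their lowest cost first: (i) for any two states $s_1,s_2$ with $\mathrm{cost}(s_1)<\mathrm{cost}(s_2)$, if LevinTS selects a node $n$ with $T(n)=s_2$, then it has previously selected a node $n'$ with $T(n')=s_1$; (ii) for every state $s$, the first node $n$ with $T(n)=s$ selected by LevinTS satisfies $\mathrm{cost}(n)=\mathrm{cost}(s)$.
   Context: Setting: a finite action set $\mathcal{A}$, a set of states $\mathcal{S}$ with initial state $s_0$, a deterministic transition function $T:\mathcal{S}\times\mathcal{A}\to\mathcal{S}$, and a set of goal states $\mathcal{G}\subseteq\mathcal{S}$. Nodes are finite sequences of actions; the root $n_0$ is the empty sequence; $T(n)$ is the state reached from $s_0$ by applying the actions of $n$ in order; the children of $n$ are $na$, $a\in\mathcal{A}$. For a node $n$ consisting of $t$ actions, $\ell(n):=t+1$ (so $\ell(n_0)=1$). A policy is a function $\pi$ from nodes to $[0,1]$ with $\pi(n_0)=1$ and $\pi(n)=\sum_{a\in\mathcal{A}}\pi(na)$; write $\pi(a\mid n)=\pi(na)/\pi(n)$. The policy is Markovian if $\pi(a\mid n_1)=\pi(a\mid n_2)$ for all actions $a$ and all nodes $n_1,n_2$ with $T(n_1)=T(n_2)$. LevinTS: maintain a frontier $\mathcal{F}$, initially $\{n_0\}$, and a record set $\mathcal{V}$,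 initially $\emptyset$. While $\mathcal{F}\neq\emptyset$: remove from $\mathcal{F}$ a node $n$ minimizing $\ell(n)/\pi(n)$ (this is the node selected/expanded at this iteration); if $T(n)\in\mathcal{G}$, stop with success; if $\pi$ is Markovian, then if there is $n'\in\mathcal{V}$ with $T(n')=T(n)$ and $\pi(n')\ge\pi(n)$, skip to the next iteration (state cut), and otherwise add $n$ to $\mathcal{V}$; finally add all children of $n$ to $\mathcal{F}$. *)

theory Defs
  imports Main "HOL-Library.Extended_Real"
begin

text \<open>Nodes are finite action sequences (lists); the child of n by action a is n @ [a].
  Actions form a finite type 'a; states are the elements of the type 's.\<close>

definition state_of :: "('s \<Rightarrow> 'a \<Rightarrow> 's) \<Rightarrow> 's \<Rightarrow> 'a list \<Rightarrow> 's" where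
  "state_of T s0 n = foldl T s0 n"

definition lev :: "'a list \<Rightarrow> nat" where
  "lev n = length n + 1"

definition is_policy :: "('a::finite list \<Rightarrow> real) \<Rightarrow> bool" where
  "is_policy \<pi> \<longleftrightarrow> (\<forall>n. 0 \<le> \<pi> n \<and> \<pi> n \<le> 1) \<and> \<pi> [] = 1 \<and>
     (\<forall>n. \<pi> n = (\<Sum>a\<in>UNIV. \<pi> (n @ [a])))"

definition cond_pol :: "('a list \<Rightarrow> real) \<Rightarrow> 'a \<Rightarrow> 'a list \<Rightarrow> real" where
  "cond_pol \<pi> a n = \<pi> (n @ [a]) / \<pi> n"

text \<open>Markovian: the conditional probabilities agree for nodes with the same state
  (whenever both conditionals are defined, i.e. both nodes have positive probability).\<close>
definition markovian :: "('s \<Rightarrow> 'a \<Rightarrow> 's) \<Rightarrow> 's \<Rightarrow> ('a list \<Rightarrow> real) \<Rightarrow> bool" where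
  "markovian T s0 \<pi> \<longleftrightarrow> (\<forall>n1 n2 a. state_of T s0 n1 = state_of T s0 n2 \<and> \<pi> n1 > 0 \<and> \<pi> n2 > 0
      \<longrightarrow> cond_pol \<pi> a n1 = cond_pol \<pi> a n2)"

definition node_cost :: "('a list \<Rightarrow> real) \<Rightarrow> 'a list \<Rightarrow> ereal" where
  "node_cost \<pi> n = (if \<pi> n = 0 then \<infinity> else ereal (real (lev n) / \<pi> n))"

text \<open>cost(s) = min over nodes reaching s (Inf; it is attained whenever finite,
  and is \<infinity> for unreachable states).\<close>
definition state_cost :: "('s \<Rightarrow> 'a \<Rightarrow> 's) \<Rightarrow> 's \<Rightarrow> ('a list \<Rightarrow> real) \<Rightarrow> 's \<Rightarrow> ereal" where
  "state_cost T s0 \<pi> s = Inf {node_cost \<pi> n | n. state_of T s0 n = s}"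

definition children :: "'a::finite list \<Rightarrow> 'a list set" where
  "children n = {n @ [a] | a. True}"

text \<open>levin_reach T s0 G \<pi> F V sel: the LevinTS run can be in a configuration with
  frontier F, record set V, having so far selected the nodes sel (in order), without
  having stopped.\<close>
inductive levin_reach :: "('s \<Rightarrow> 'a::finite \<Rightarrow> 's) \<Rightarrow> 's \<Rightarrow> 's set \<Rightarrow> ('a list \<Rightarrow> real)
    \<Rightarrow> 'a list set \<Rightarrow> 'a list set \<Rightarrow> 'a list list \<Rightarrow> bool"
  for T s0 G \<pi> where
  init: "levin_reach T s0 G \<pi> {[]} {} []"
| cut: "\<lbrakk> levin_reach T s0 G \<pi> F V sel; n \<in> F; \<forall>m\<in>F. node_cost \<pi> n \<le> node_cost \<pi> m;
          state_of T s0 n \<notin> G; markovian T s0 \<pi>;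
          \<exists>n'\<in>V. state_of T s0 n' = state_of T s0 n \<and> \<pi> n' \<ge> \<pi> n \<rbrakk>
        \<Longrightarrow> levin_reach T s0 G \<pi> (F - {n}) V (sel @ [n])"
| expand_markov: "\<lbrakk> levin_reach T s0 G \<pi> F V sel; n \<in> F; \<forall>m\<in>F. node_cost \<pi> n \<le> node_cost \<pi> m;
          state_of T s0 n \<notin> G; markovian T s0 \<pi>;
          \<not> (\<exists>n'\<in>V. state_of T s0 n' = state_of T s0 n \<and> \<pi> n' \<ge> \<pi> n) \<rbrakk>
        \<Longrightarrow> levin_reach T s0 G \<pi> ((F - {n}) \<union> children n) (insert n V) (sel @ [n])"
| expand_plain: "\<lbrakk> levin_reach T s0 G \<pi> F V sel; n \<in> F; \<forall>m\<in>F. node_cost \<pi> n \<le> node_cost \<pi> m;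
          state_of T s0 n \<notin> G; \<not> markovian T s0 \<pi> \<rbrakk>
        \<Longrightarrow> levin_reach T s0 G \<pi> ((F - {n}) \<union> children n) V (sel @ [n])"

end

theory Submission
  imports Defs
begin

lemma pol_child_le:
  assumes "is_policy \<pi>"
  shows "\<pi> (n @ [a]) \<le> \<pi> n"
proof -
  have nn: "\<forall>x. 0 \<le> \<pi> x" and sm: "\<pi> n = (\<Sum>b\<in>UNIV. \<pi> (n @ [b]))"
    using assms unfolding is_policy_def by blast+
  have "\<pi> (n @ [a]) \<le> (\<Sum>b\<in>UNIV. \<pi> (n @ [b]))"
    by (rule member_le_sum) (use nn in auto)
  with sm show ?thesis by simp
qed

lemma cost_child:
  assumes "is_policy \<pi>"
  shows "node_cost \<pi> n \<le> node_cost \<pi> (n @ [a])"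
proof (cases "\<pi> (n @ [a]) = 0")
  case True then show ?thesis by (simp add: node_cost_def)
next
  case False
  have nn: "\<forall>x. 0 \<le> \<pi> x" using assms unfolding is_policy_def by blast
  have le: "\<pi> (n @ [a]) \<le> \<pi> n" using pol_child_le[OF assms] .
  have pos: "0 < \<pi> (n @ [a])" using False nn by (metis less_eq_real_def)
  have "real (lev n) / \<pi> n \<le> real (lev (n @ [a])) / \<pi> (n @ [a])"
    by (rule frac_le) (use pos le in \<open>auto simp: lev_def\<close>)
  then show ?thesis using False pos le by (simp add: node_cost_def)
qed

lemma state_of_snoc: "state_of T s0 (x @ [a]) = T (state_of T s0 x) a"
  by (simp add: state_of_def)

definition invs where
  "invs T s0 \<pi> F V sel \<longleftrightarrow>
     (\<forall>x\<in>set sel. \<forall>y\<in>F. node_cost \<pi> x \<le> node_cost \<pi> y)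
   \<and> ([] \<in> F \<or> [] \<in> set sel)
   \<and> (\<forall>x a. (if markovian T s0 \<pi> then x \<in> V else x \<in> set sel) \<longrightarrow> x @ [a] \<in> F \<or> x @ [a] \<in> set sel)
   \<and> V \<subseteq> set sel
   \<and> (markovian T s0 \<pi> \<longrightarrow> (\<forall>x\<in>set sel. x \<in> V \<or> (\<exists>x'\<in>V. state_of T s0 x' = state_of T s0 x
          \<and> \<pi> x' \<ge> \<pi> x \<and> node_cost \<pi> x' \<le> node_cost \<pi> x)))"

lemma invs_reach:
  assumes pol: "is_policy \<pi>"
  shows "levin_reach T s0 G \<pi> F V sel \<Longrightarrow> invs T s0 \<pi> F V sel"
proof (induction rule: levin_reach.induct)
  case init
  then show ?case by (simp add: invs_def)
next
  case (cut F V sel n)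
  have A1: "\<forall>x\<in>set sel. \<forall>y\<in>F. node_cost \<pi> x \<le> node_cost \<pi> y"
   and A2: "[] \<in> F \<or> [] \<in> set sel"
   and A3: "\<forall>x a. (if markovian T s0 \<pi> then x \<in> V else x \<in> set sel) \<longrightarrow> x @ [a] \<in> F \<or> x @ [a] \<in> set sel"
   and A4: "V \<subseteq> set sel"
   and A5: "markovian T s0 \<pi> \<longrightarrow> (\<forall>x\<in>set sel. x \<in> V \<or> (\<exists>x'\<in>V. state_of T s0 x' = state_of T s0 x
          \<and> \<pi> x' \<ge> \<pi> x \<and> node_cost \<pi> x' \<le> node_cost \<pi> x))"
    using cut.IH unfolding invs_def by blast+
  have B1: "\<forall>x\<in>set (sel@[n]). \<forall>y\<in>F-{n}. node_cost \<pi> x \<le> node_cost \<pi> y"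
    using A1 cut.hyps by auto
  have B2: "[] \<in> F-{n} \<or> [] \<in> set (sel@[n])" using A2 by auto
  have B3: "\<forall>x a. (if markovian T s0 \<pi> then x \<in> V else x \<in> set (sel@[n])) \<longrightarrow> x @ [a] \<in> F-{n} \<or> x @ [a] \<in> set (sel@[n])"
    using A3 cut.hyps by auto
  have B4: "V \<subseteq> set (sel@[n])" using A4 by auto
  obtain n' where n': "n'\<in>V" "state_of T s0 n' = state_of T s0 n" "\<pi> n' \<ge> \<pi> n"
    using cut.hyps by blast
  have "node_cost \<pi> n' \<le> node_cost \<pi> n" using A1 A4 n'(1) cut.hyps(2) by blast
  then have B5: "markovian T s0 \<pi> \<longrightarrow> (\<forall>x\<in>set (sel@[n]). x \<in> V \<or> (\<exists>x'\<in>V. state_of T s0 x' = state_of T s0 x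
          \<and> \<pi> x' \<ge> \<pi> x \<and> node_cost \<pi> x' \<le> node_cost \<pi> x))"
    using A5 n' by auto
  show ?case unfolding invs_def using B1 B2 B3 B4 B5 by blast
next
  case (expand_markov F V sel n)
  have A1: "\<forall>x\<in>set sel. \<forall>y\<in>F. node_cost \<pi> x \<le> node_cost \<pi> y"
   and A2: "[] \<in> F \<or> [] \<in> set sel"
   and A3: "\<forall>x a. (if markovian T s0 \<pi> then x \<in> V else x \<in> set sel) \<longrightarrow> x @ [a] \<in> F \<or> x @ [a] \<in> set sel"
   and A4: "V \<subseteq> set sel"
   and A5: "markovian T s0 \<pi> \<longrightarrow> (\<forall>x\<in>set sel. x \<in> V \<or> (\<exists>x'\<in>V. state_of T s0 x' = state_of T s0 x
          \<and> \<pi> x' \<ge> \<pi> x \<and> node_cost \<pi> x' \<le> node_cost \<pi> x))"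
    using expand_markov.IH unfolding invs_def by blast+
  let ?F = "F - {n} \<union> children n"
  have ch: "\<And>a. n @ [a] \<in> children n" by (auto simp: children_def)
  have chc: "\<And>y. y \<in> children n \<Longrightarrow> node_cost \<pi> n \<le> node_cost \<pi> y"
    using cost_child[OF pol, of n] by (auto simp: children_def)
  have B1: "\<forall>x\<in>set (sel@[n]). \<forall>y\<in>?F. node_cost \<pi> x \<le> node_cost \<pi> y"
  proof (intro ballI)
    fix x y assume x: "x \<in> set (sel@[n])" and y: "y \<in> ?F"
    show "node_cost \<pi> x \<le> node_cost \<pi> y"
    proof (cases "y \<in> children n")
      case True
      have "node_cost \<pi> x \<le> node_cost \<pi> n" using x A1 expand_markov.hyps(2) by auto
      then show ?thesis using chc[OF True] by (rule order_trans)
    next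
      case False
      then show ?thesis using x y A1 expand_markov.hyps(3) by auto
    qed
  qed
  have B2: "[] \<in> ?F \<or> [] \<in> set (sel@[n])" using A2 by auto
  have B3: "\<forall>x a. (if markovian T s0 \<pi> then x \<in> insert n V else x \<in> set (sel@[n])) \<longrightarrow> x @ [a] \<in> ?F \<or> x @ [a] \<in> set (sel@[n])"
    using A3 expand_markov.hyps ch by auto
  have B4: "insert n V \<subseteq> set (sel@[n])" using A4 by auto
  have B5: "markovian T s0 \<pi> \<longrightarrow> (\<forall>x\<in>set (sel@[n]). x \<in> insert n V \<or> (\<exists>x'\<in>insert n V. state_of T s0 x' = state_of T s0 x
          \<and> \<pi> x' \<ge> \<pi> x \<and> node_cost \<pi> x' \<le> node_cost \<pi> x))"
    using A5 by auto
  show ?case unfolding invs_def using B1 B2 B3 B4 B5 by blast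
next
  case (expand_plain F V sel n)
  have A1: "\<forall>x\<in>set sel. \<forall>y\<in>F. node_cost \<pi> x \<le> node_cost \<pi> y"
   and A2: "[] \<in> F \<or> [] \<in> set sel"
   and A3: "\<forall>x a. (if markovian T s0 \<pi> then x \<in> V else x \<in> set sel) \<longrightarrow> x @ [a] \<in> F \<or> x @ [a] \<in> set sel"
   and A4: "V \<subseteq> set sel"
    using expand_plain.IH unfolding invs_def by blast+
  let ?F = "F - {n} \<union> children n"
  have ch: "\<And>a. n @ [a] \<in> children n" by (auto simp: children_def)
  have chc: "\<And>y. y \<in> children n \<Longrightarrow> node_cost \<pi> n \<le> node_cost \<pi> y"
    using cost_child[OF pol, of n] by (auto simp: children_def)
  have B1: "\<forall>x\<in>set (sel@[n]). \<forall>y\<in>?F. node_cost \<pi> x \<le> node_cost \<pi> y"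
  proof (intro ballI)
    fix x y assume x: "x \<in> set (sel@[n])" and y: "y \<in> ?F"
    show "node_cost \<pi> x \<le> node_cost \<pi> y"
    proof (cases "y \<in> children n")
      case True
      have "node_cost \<pi> x \<le> node_cost \<pi> n" using x A1 expand_plain.hyps(2) by auto
      then show ?thesis using chc[OF True] by (rule order_trans)
    next
      case False
      then show ?thesis using x y A1 expand_plain.hyps(3) by auto
    qed
  qed
  have B2: "[] \<in> ?F \<or> [] \<in> set (sel@[n])" using A2 by auto
  have B3: "\<forall>x a. (if markovian T s0 \<pi> then x \<in> V else x \<in> set (sel@[n])) \<longrightarrow> x @ [a] \<in> ?F \<or> x @ [a] \<in> set (sel@[n])"
    using A3 expand_plain.hyps ch by auto
  have B4: "V \<subseteq> set (sel@[n])" using A4 by auto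
  show ?case unfolding invs_def using B1 B2 B3 B4 expand_plain.hyps(5) by blast
qed

lemma key:
  assumes pol: "is_policy \<pi>" and inv: "invs T s0 \<pi> F V sel"
  shows "(\<forall>y\<in>F. node_cost \<pi> m < node_cost \<pi> y) \<Longrightarrow> \<pi> m > 0 \<Longrightarrow>
    \<exists>x\<in>set sel. state_of T s0 x = state_of T s0 m \<and> node_cost \<pi> x \<le> node_cost \<pi> m
      \<and> \<pi> x \<ge> \<pi> m \<and> (\<not> markovian T s0 \<pi> \<longrightarrow> x = m)"
proof (induction m rule: rev_induct)
  have A1: "\<forall>x\<in>set sel. \<forall>y\<in>F. node_cost \<pi> x \<le> node_cost \<pi> y"
   and A2: "[] \<in> F \<or> [] \<in> set sel"
   and A3: "\<forall>x a. (if markovian T s0 \<pi> then x \<in> V else x \<in> set sel) \<longrightarrow> x @ [a] \<in> F \<or> x @ [a] \<in> set sel"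
   and A4: "V \<subseteq> set sel"
   and A5: "markovian T s0 \<pi> \<longrightarrow> (\<forall>x\<in>set sel. x \<in> V \<or> (\<exists>x'\<in>V. state_of T s0 x' = state_of T s0 x
          \<and> \<pi> x' \<ge> \<pi> x \<and> node_cost \<pi> x' \<le> node_cost \<pi> x))"
    using inv unfolding invs_def by blast+
  note A = A1 A2 A3 A4 A5
  {
  case Nil
  then have "[] \<notin> F" by auto
  then have "[] \<in> set sel" using A2 by auto
  then show ?case by auto
  next
  case (snoc a q)
  have nn: "\<And>x. 0 \<le> \<pi> x" using pol unfolding is_policy_def by blast
  have cq: "node_cost \<pi> q \<le> node_cost \<pi> (q @ [a])" by (rule cost_child[OF pol])
  have pq: "\<pi> (q @ [a]) \<le> \<pi> q" by (rule pol_child_le[OF pol])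
  have Hq: "\<forall>y\<in>F. node_cost \<pi> q < node_cost \<pi> y" using snoc.prems(1) cq by (meson order_le_less_trans)
  have pqpos: "\<pi> q > 0" using snoc.prems(2) pq by linarith
  obtain x where x: "x \<in> set sel" "state_of T s0 x = state_of T s0 q" "node_cost \<pi> x \<le> node_cost \<pi> q"
     "\<pi> x \<ge> \<pi> q" "\<not> markovian T s0 \<pi> \<longrightarrow> x = q"
    using snoc.IH[OF Hq pqpos] by blast
  show ?case
  proof (cases "markovian T s0 \<pi>")
    case False
    then have "x = q" using x by auto
    then have "q @ [a] \<in> F \<or> q @ [a] \<in> set sel" using A3 x(1) False by auto
    then have "q @ [a] \<in> set sel" using snoc.prems(1) by auto
    then show ?thesis by auto
  next
    case True
    obtain z where z: "z \<in> V" "state_of T s0 z = state_of T s0 q" "node_cost \<pi> z \<le> node_cost \<pi> q"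
       "\<pi> z \<ge> \<pi> q"
      using A5 True x by (metis order_trans)
    have zpos: "\<pi> z > 0" using z(4) pqpos by linarith
    have mk: "cond_pol \<pi> a z = cond_pol \<pi> a q"
      using True z(2) zpos pqpos unfolding markovian_def by blast
    define r where "r = \<pi> (q @ [a]) / \<pi> q"
    have rpos: "r > 0" using snoc.prems(2) pqpos by (simp add: r_def)
    have pz: "\<pi> (z @ [a]) = \<pi> z * r" using mk zpos unfolding cond_pol_def r_def by (simp add: field_simps)
    have pm: "\<pi> (q @ [a]) = \<pi> q * r" using pqpos unfolding r_def by simp
    have pzpos: "\<pi> (z @ [a]) > 0" using pz zpos rpos by simp
    have pge: "\<pi> (z @ [a]) \<ge> \<pi> (q @ [a])" using pz pm z(4) rpos by (simp add: mult_right_mono)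
    have "real (lev z) / \<pi> z \<le> real (lev q) / \<pi> q"
      using z(3) zpos pqpos by (simp add: node_cost_def)
    moreover have "1 / \<pi> z \<le> 1 / \<pi> q" using z(4) pqpos by (simp add: frac_le)
    ultimately have "real (lev z) / \<pi> z + 1 / \<pi> z \<le> real (lev q) / \<pi> q + 1 / \<pi> q" by simp
    then have "(real (lev z) + 1) / \<pi> z \<le> (real (lev q) + 1) / \<pi> q" by (simp add: add_divide_distrib)
    then have "(real (lev z) + 1) / \<pi> z / r \<le> (real (lev q) + 1) / \<pi> q / r"
      by (rule divide_right_mono) (use rpos in auto)
    moreover have "(real (lev z) + 1) / \<pi> z / r = real (lev (z @ [a])) / \<pi> (z @ [a])"
      by (simp add: pz lev_def divide_divide_eq_left)
    moreover have "(real (lev q) + 1) / \<pi> q / r = real (lev (q @ [a])) / \<pi> (q @ [a])"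
      by (simp add: pm lev_def divide_divide_eq_left)
    ultimately have "real (lev (z @ [a])) / \<pi> (z @ [a]) \<le> real (lev (q @ [a])) / \<pi> (q @ [a])"
      by simp
    then have cle: "node_cost \<pi> (z @ [a]) \<le> node_cost \<pi> (q @ [a])"
      using pzpos snoc.prems(2) by (simp add: node_cost_def)
    have "z @ [a] \<in> F \<or> z @ [a] \<in> set sel" using A3 z(1) True by auto
    moreover have "z @ [a] \<notin> F" using cle snoc.prems(1) by (meson leD order_le_less_trans)
    ultimately have "z @ [a] \<in> set sel" by auto
    moreover have "state_of T s0 (z @ [a]) = state_of T s0 (q @ [a])" using z(2) by (simp add: state_of_snoc)
    ultimately show ?thesis using cle pge True by blast
  qed
  }
qed

theorem theorem2:
  fixes T :: "'s \<Rightarrow> 'a::finite \<Rightarrow> 's" and s0 :: 's and G :: "'s set"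
    and \<pi> :: "'a list \<Rightarrow> real"
  assumes "is_policy \<pi>"
    and "levin_reach T s0 G \<pi> F V sel"
    and "n \<in> F" and "\<forall>m\<in>F. node_cost \<pi> n \<le> node_cost \<pi> m"
  shows "(\<forall>s1 s2. state_cost T s0 \<pi> s1 < state_cost T s0 \<pi> s2 \<and> state_of T s0 n = s2
            \<longrightarrow> (\<exists>n'\<in>set sel. state_of T s0 n' = s1))
       \<and> ((\<forall>m\<in>set sel. state_of T s0 m \<noteq> state_of T s0 n)
            \<longrightarrow> node_cost \<pi> n = state_cost T s0 \<pi> (state_of T s0 n))"
proof -
  have inv: "invs T s0 \<pi> F V sel" using invs_reach[OF assms(1) assms(2)] .
  have nn: "\<And>x. 0 \<le> \<pi> x" using assms(1) unfolding is_policy_def by blast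
  have low: "state_cost T s0 \<pi> (state_of T s0 n) \<le> node_cost \<pi> n"
    unfolding state_cost_def by (rule Inf_lower) auto
  have main: "\<exists>x\<in>set sel. state_of T s0 x = s" if "state_cost T s0 \<pi> s < node_cost \<pi> n" for s
  proof -
    have "\<exists>x\<in>{node_cost \<pi> m | m. state_of T s0 m = s}. x < node_cost \<pi> n"
      using that unfolding state_cost_def by (simp only: Inf_less_iff)
    then obtain m where m: "state_of T s0 m = s" "node_cost \<pi> m < node_cost \<pi> n"
      by blast
    have "\<pi> m \<noteq> 0" using m(2) by (auto simp: node_cost_def)
    then have pm: "\<pi> m > 0" using nn[of m] by linarith
    have "\<forall>y\<in>F. node_cost \<pi> m < node_cost \<pi> y" using m(2) assms(4) by (meson order_less_le_trans)
    then show ?thesis using key[OF assms(1) inv _ pm] m(1) by blast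
  qed
  show ?thesis
  proof (intro conjI allI impI)
    fix s1 s2 assume h: "state_cost T s0 \<pi> s1 < state_cost T s0 \<pi> s2 \<and> state_of T s0 n = s2"
    then have "state_cost T s0 \<pi> s1 < node_cost \<pi> n" using low by auto
    then show "\<exists>n'\<in>set sel. state_of T s0 n' = s1" by (rule main)
  next
    assume h: "\<forall>m\<in>set sel. state_of T s0 m \<noteq> state_of T s0 n"
    show "node_cost \<pi> n = state_cost T s0 \<pi> (state_of T s0 n)"
    proof (rule ccontr)
      assume "node_cost \<pi> n \<noteq> state_cost T s0 \<pi> (state_of T s0 n)"
      then have "state_cost T s0 \<pi> (state_of T s0 n) < node_cost \<pi> n" using low by auto
      then show False using main h by blast
    qed
  qed
qed

end
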